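(* Let $M\ge1$, $\beta,\hat\beta>0$, and suppose $$\beta^{-1}>1+(M-1)\,m_0(\hat\beta)^2 .$$ Then the only solution $\mathbf{p}\in\mathbb{R}^M$ of $$\mathbf{p}=\big\langle \mathbf{s}\tanh(\beta\,\mathbf{s}\cdot\mathbf{p})\big\rangle_{\mathbf{s},\hat\beta}$$ is $\mathbf{p}=\mathbf{0}$, and consequently $m:=\langle\tanh(\beta\,\mathbf{s}\cdot\mathbf{p})\rangle_{\mathbf{s},\hat\beta}=0$.
   Context: $m_0(\hat\beta)$ is the largest nonnegative solution of $m=\tanh(\hat\beta m)$. $\langle\cdot\rangle_{\mathbf{s},\hat\beta}$ denotes expectation over $\mathbf{s}\in\{-1,1\}^M$ with i.i.d. entries of mean $m_0(\hat\beta)$, i.e. with weight $e^{\hat\beta m_0(\hat\beta)\sum_\mu s_\mu}/(2\cosh(\hat\beta m_0(\hat\beta)))^M$. This is the stationarity equation of $g(\mathbf{p};\hat\beta,\beta)=\log2-\beta|\mathbf{p}|^2/2+\langle\log\cosh(\beta\mathbf{s}\cdot\mathbf{p})\rangle_{\mathbf{s},\hat\beta}$. *)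

theory Defs
  imports "HOL-Analysis.Analysis"
begin

definition m0 :: "real \<Rightarrow> real" where
  "m0 bh = (GREATEST m. 0 \<le> m \<and> m = tanh (bh * m))"

definition spins :: "(real ^ 'n::finite) set" where
  "spins = {s. \<forall>i. s $ i = 1 \<or> s $ i = -1}"

text \<open>Weight of a configuration under the i.i.d. measure with mean m0(bh).\<close>
definition spin_weight :: "real \<Rightarrow> real ^ 'n::finite \<Rightarrow> real" where
  "spin_weight bh s =
     exp (bh * m0 bh * (\<Sum>i\<in>UNIV. s $ i)) / (2 * cosh (bh * m0 bh)) ^ CARD('n)"

definition spin_avg :: "real \<Rightarrow> (real ^ 'n::finite \<Rightarrow> 'b::real_vector) \<Rightarrow> 'b" where
  "spin_avg bh f = (\<Sum>s\<in>spins. spin_weight bh s *\<^sub>R f s)"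

end

theory Submission imports Defs "HOL-Library.FuncSet" begin

lemma tanh_le_self: "0 \<le> (x::real) \<Longrightarrow> tanh x \<le> x"
proof -
  assume x: "0 \<le> x"
  have "(\<lambda>y. y - tanh y) 0 \<le> (\<lambda>y. y - tanh y) x"
  proof (rule DERIV_nonneg_imp_nondecreasing[OF x])
    fix y :: real
    have "cosh y \<noteq> 0" by (metis cosh_real_pos less_irrefl)
    hence "((\<lambda>y. y - tanh y) has_real_derivative 1 - (1 - tanh y ^ 2)) (at y)"
      by (auto intro!: derivative_eq_intros)
    thus "\<exists>d. ((\<lambda>y. y - tanh y) has_real_derivative d) (at y) \<and> 0 \<le> d" by force
  qed
  thus ?thesis by simp
qed

lemma abs_tanh_le: "\<bar>tanh (x::real)\<bar> \<le> \<bar>x\<bar>"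
  by (metis tanh_real_abs tanh_le_self abs_ge_zero)

lemma x_tanh_le: "(x::real) * tanh (b * x) \<le> b * x^2" if "b > 0"
proof -
  have "x * tanh (b*x) \<le> \<bar>x\<bar> * \<bar>tanh (b*x)\<bar>" by (metis abs_ge_self abs_mult)
  also have "\<dots> \<le> \<bar>x\<bar> * \<bar>b*x\<bar>" by (simp add: abs_tanh_le mult_left_mono)
  also have "\<dots> = b * x^2" using that by (simp add: abs_mult power2_eq_square)
  finally show ?thesis .
qed

lemma m0_fix: "m0 bh = tanh (bh * m0 bh)"
proof -
  define S where "S = {m::real. 0 \<le> m \<and> m = tanh (bh * m)}"
  have "closed S" unfolding S_def
    by (intro closed_Collect_conj closed_Collect_le closed_Collect_eq continuous_intros) (simp add: cosh_real_pos less_imp_neq[symmetric])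
  moreover have "bdd_above S" unfolding S_def
  proof (rule bdd_aboveI[of _ 1])
    fix x assume "x \<in> {m::real. 0 \<le> m \<and> m = tanh (bh * m)}"
    hence "x = tanh (bh * x)" by simp
    thus "x \<le> 1" using tanh_real_lt_1[of "bh*x"] by linarith
  qed
  moreover have "0 \<in> S" unfolding S_def by simp
  ultimately have sup: "Sup S \<in> S" using closed_contains_Sup by blast
  have ub: "y \<le> Sup S" if "y \<in> S" for y using cSup_upper[OF that \<open>bdd_above S\<close>] .
  have "m0 bh \<in> S" unfolding m0_def
  proof (rule GreatestI2_order[of _ "Sup S"])
    show "0 \<le> Sup S \<and> Sup S = tanh (bh * Sup S)" using sup by (simp add: S_def)
    show "y \<le> Sup S" if "0 \<le> y \<and> y = tanh (bh * y)" for y using ub that by (simp add: S_def)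
    show "x \<in> S" if "0 \<le> x \<and> x = tanh (bh * x)" for x using that by (simp add: S_def)
  qed
  thus ?thesis by (simp add: S_def)
qed

lemma spins_prod:
  fixes g :: "'n::finite \<Rightarrow> real \<Rightarrow> real"
  shows "(\<Sum>s\<in>(spins::(real^'n) set). \<Prod>i\<in>UNIV. g i (s$i)) = (\<Prod>i\<in>UNIV. g i 1 + g i (-1))"
proof -
  have "(\<Prod>i\<in>UNIV. g i 1 + g i (-1)) = (\<Prod>i\<in>UNIV. \<Sum>y\<in>{1,-1}. g i y)" by simp
  also have "\<dots> = (\<Sum>f\<in>PiE UNIV (\<lambda>_. {1,-1}). \<Prod>i\<in>UNIV. g i (f i))"
    by (rule prod_sum_PiE) auto
  also have "\<dots> = (\<Sum>s\<in>(spins::(real^'n) set). \<Prod>i\<in>UNIV. g i (s$i))"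
    by (rule sum.reindex_bij_witness[of _ "vec_nth" "vec_lambda"])
       (auto simp: spins_def PiE_def extensional_def)
  finally show ?thesis by simp
qed

lemma inner_sum_aux:
  fixes y :: "'n::finite \<Rightarrow> real"
  shows "(\<Sum>j\<in>UNIV. x * y j * (c + (if i = j then d else 0))) = c * (\<Sum>j\<in>UNIV. x * y j) + d * (x * y i)"
proof -
  have "(\<Sum>j\<in>UNIV. x * y j * (c + (if i = j then d else 0)))
      = (\<Sum>j\<in>UNIV. c * (x * y j) + (if i = j then d * (x * y j) else 0))"
    by (intro sum.cong refl) (auto simp: algebra_simps)
  also have "\<dots> = c * (\<Sum>j\<in>UNIV. x * y j) + d * (x * y i)"
    by (simp add: sum.distrib sum_distrib_left)
  finally show ?thesis .
qed

theorem proposition5: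
  fixes \<beta> bh :: real and p :: "real ^ 'n::finite"
  assumes "\<beta> > 0" and "bh > 0"
    and "1 / \<beta> > 1 + (real CARD('n) - 1) * (m0 bh)\<^sup>2"
    and "p = spin_avg bh (\<lambda>s. tanh (\<beta> * (s \<bullet> p)) *\<^sub>R s)"
  shows "p = 0 \<and> spin_avg bh (\<lambda>s. tanh (\<beta> * (s \<bullet> p))) = 0"
proof -
  define a where "a = bh * m0 bh"
  define c where "c = 2 * cosh a"
  define t where "t = tanh a"
  have c_pos: "c > 0" unfolding c_def by (simp add: cosh_real_pos)
  have t_eq: "t = m0 bh" using m0_fix[of bh] unfolding t_def a_def by simp
  define h where "h x = exp (a*x)/c" for x::real
  have w_prod: "spin_weight bh s = (\<Prod>i\<in>UNIV. h (s$i))" for s :: "real^'n"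
    unfolding spin_weight_def h_def a_def[symmetric] c_def[symmetric]
    by (simp add: exp_sum prod_dividef sum_distrib_left)
  have w_nonneg: "spin_weight bh s \<ge> 0" for s :: "real^'n"
    unfolding w_prod h_def using c_pos by (simp add: prod_nonneg)
  have ea: "exp a + exp (-a) = 2 * cosh a" "exp a - exp (-a) = 2 * sinh a"
    by (simp_all add: cosh_def sinh_def)
  have "h 1 + h (-1) = (exp a + exp (-a)) / c" by (simp add: h_def add_divide_distrib)
  hence hsum: "h 1 + h (-1) = 1" unfolding ea c_def using cosh_real_pos[of a] by simp
  have "h 1 - h (-1) = (exp a - exp (-a)) / c" by (simp add: h_def diff_divide_distrib)
  hence hdiff: "h 1 - h (-1) = t" unfolding ea c_def t_def tanh_def by simp
  have E: "(\<Sum>s\<in>spins. spin_weight bh s * (s$i * s$j)) = (if i = j then 1 else t^2)"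
    for i j :: 'n
  proof (cases "i = j")
    case True
    have "(\<Sum>s\<in>spins. spin_weight bh s * (s$i * s$j)) = (\<Sum>s\<in>(spins::(real^'n) set). \<Prod>k\<in>UNIV. h (s$k))"
      using True by (intro sum.cong refl) (auto simp: spins_def w_prod, metis mult_1 mult_minus1 minus_minus)
    also have "\<dots> = 1" using spins_prod[of "\<lambda>k x. h x"] by (simp add: hsum)
    finally show ?thesis using True by simp
  next
    case False
    define g where "g k x = h x * (if k = i then x else 1) * (if k = j then x else 1)" for k x
    have "(\<Sum>s\<in>spins. spin_weight bh s * (s$i * s$j)) = (\<Sum>s\<in>(spins::(real^'n) set). \<Prod>k\<in>UNIV. g k (s$k))"
      unfolding g_def w_prod by (simp add: prod.distrib prod.delta mult.assoc)
    also have "\<dots> = (\<Prod>k\<in>UNIV. g k 1 + g k (-1))" by (rule spins_prod)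
    also have "\<dots> = (\<Prod>k\<in>UNIV. (if k = i then t else 1) * (if k = j then t else 1))"
      using False hsum hdiff by (intro prod.cong) (auto simp: g_def)
    also have "\<dots> = t^2" using False by (simp add: prod.distrib prod.delta power2_eq_square)
    finally show ?thesis using False by simp
  qed
  have sq: "(s \<bullet> p)^2 = (\<Sum>i\<in>UNIV. \<Sum>j\<in>UNIV. (p$i * p$j) * (s$i * s$j))" for s :: "real^'n"
    unfolding inner_vec_def power2_eq_square inner_real_def
    by (simp add: sum_product algebra_simps)
  have Q: "(\<Sum>s\<in>spins. spin_weight bh s * (s \<bullet> p)^2)
        = t^2 * (\<Sum>i\<in>UNIV. p$i)^2 + (1 - t^2) * (p \<bullet> p)"
  proof -
    have "(\<Sum>s\<in>spins. spin_weight bh s * (s \<bullet> p)^2)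
        = (\<Sum>i\<in>UNIV. \<Sum>j\<in>UNIV. (p$i * p$j) * (\<Sum>s\<in>spins. spin_weight bh s * (s$i * s$j)))"
      unfolding sq
    proof -
      have "(\<Sum>s\<in>spins. spin_weight bh s * (\<Sum>i\<in>UNIV. \<Sum>j\<in>UNIV. p $ i * p $ j * (s $ i * s $ j)))
          = (\<Sum>s\<in>spins. \<Sum>i\<in>UNIV. \<Sum>j\<in>UNIV. p $ i * p $ j * (spin_weight bh s * (s $ i * s $ j)))"
        by (simp add: sum_distrib_left mult_ac)
      also have "\<dots> = (\<Sum>i\<in>UNIV. \<Sum>j\<in>UNIV. \<Sum>s\<in>spins. p $ i * p $ j * (spin_weight bh s * (s $ i * s $ j)))"
        apply (subst sum.swap[where A=spins])
        apply (rule sum.cong[OF refl])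
        apply (rule sum.swap[where A=spins])
        done
      also have "\<dots> = (\<Sum>i\<in>UNIV. \<Sum>j\<in>UNIV. (p$i * p$j) * (\<Sum>s\<in>spins. spin_weight bh s * (s$i * s$j)))"
        by (simp only: sum_distrib_left)
      finally show "(\<Sum>s\<in>spins. spin_weight bh s * (\<Sum>i\<in>UNIV. \<Sum>j\<in>UNIV. p $ i * p $ j * (s $ i * s $ j)))
          = (\<Sum>i\<in>UNIV. \<Sum>j\<in>UNIV. (p$i * p$j) * (\<Sum>s\<in>spins. spin_weight bh s * (s$i * s$j)))" .
    qed
    also have "\<dots> = (\<Sum>i\<in>UNIV. \<Sum>j\<in>UNIV. (p$i * p$j) * (t^2 + (if i = j then 1 - t^2 else 0)))"
      unfolding E by (intro sum.cong refl) auto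
    also have "\<dots> = t^2 * (\<Sum>i\<in>UNIV. \<Sum>j\<in>UNIV. p$i * p$j) + (1 - t^2) * (\<Sum>i\<in>UNIV. p$i * p$i)"
      by (simp only: inner_sum_aux sum.distrib sum_distrib_left[symmetric])
    also have "\<dots> = t^2 * (\<Sum>i\<in>UNIV. p$i)^2 + (1 - t^2) * (p \<bullet> p)"
      by (simp add: inner_vec_def power2_eq_square sum_product)
    finally show ?thesis .
  qed
  have CS: "(\<Sum>i\<in>UNIV. p$i)^2 \<le> real CARD('n) * (p \<bullet> p)"
  proof -
    have "(((\<chi> i. 1) :: real^'n) \<bullet> p)^2 \<le> (((\<chi> i. 1) :: real^'n) \<bullet> ((\<chi> i. 1) :: real^'n)) * (p \<bullet> p)"
      by (rule Cauchy_Schwarz_ineq)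
    thus ?thesis by (simp add: inner_vec_def)
  qed
  have main: "p \<bullet> p \<le> \<beta> * (\<Sum>s\<in>spins. spin_weight bh s * (s \<bullet> p)^2)"
  proof -
    have "p \<bullet> p = p \<bullet> spin_avg bh (\<lambda>s. tanh (\<beta> * (s \<bullet> p)) *\<^sub>R s)"
      using assms(4) by simp
    also have "\<dots> = (\<Sum>s\<in>spins. spin_weight bh s * ((s \<bullet> p) * tanh (\<beta> * (s \<bullet> p))))"
      unfolding spin_avg_def by (simp add: inner_sum_right inner_commute algebra_simps)
    also have "\<dots> \<le> (\<Sum>s\<in>spins. spin_weight bh s * (\<beta> * (s \<bullet> p)^2))"
      by (intro sum_mono mult_left_mono x_tanh_le w_nonneg assms(1))
    also have "\<dots> = \<beta> * (\<Sum>s\<in>spins. spin_weight bh s * (s \<bullet> p)^2)"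
      by (simp add: sum_distrib_left algebra_simps)
    finally show ?thesis .
  qed
  define K where "K = 1 + (real CARD('n) - 1) * t^2"
  have t2: "t^2 \<ge> 0" by simp
  have QK: "(\<Sum>s\<in>spins. spin_weight bh s * (s \<bullet> p)^2) \<le> K * (p \<bullet> p)"
    unfolding Q K_def using mult_left_mono[OF CS t2] by (simp add: algebra_simps)
  have bK: "\<beta> * K < 1" using assms(1,3) unfolding K_def t_eq by (simp add: field_simps)
  have pp: "p \<bullet> p \<le> (\<beta> * K) * (p \<bullet> p)"
    using main QK mult_left_mono[OF QK less_imp_le[OF assms(1)]] by (simp add: mult.assoc)
  have "(1 - \<beta> * K) * (p \<bullet> p) \<le> 0" using pp by (simp add: algebra_simps)
  hence "p \<bullet> p \<le> 0" using bK by (simp add: mult_le_0_iff)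
  hence "p \<bullet> p = 0" using inner_ge_zero[of p] by linarith
  hence p0: "p = 0" by simp
  show ?thesis using p0 by (simp add: spin_avg_def)
qed

end
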